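(* Every digraph $D$ with minimum out-degree $\delta^+(D) \ge 2$ contains a subdivision of $\overleftrightarrow{K}_3 - e$.
   Context: Digraphs are finite, loopless, have no parallel arcs, but may contain digons (pairs of anti-parallel arcs). $\overleftrightarrow{K}_3$ is the bioriented triangle: the digraph on three vertices containing both arcs $(u,v)$ and $(v,u)$ for every pair of distinct vertices; $\overleftrightarrow{K}_3 - e$ is the digraph obtained from it by deleting a single arc. A subdivision of a digraph $F$ is a digraph obtained by replacing each arc $(x,y)$ of $F$ by a directed path from $x$ to $y$, such that the paths corresponding to different arcs are internally vertex-disjoint. $\delta^+(D)$ denotes the minimum out-degree of $D$. *)

theory Defs
  imports Main
begin

text \<open>A digraph is a pair (V, A) of a finite vertex set and an arc set A \<subseteq> V \<times> V
  without loops. Parallel arcs are impossible since A is a set; digons are allowed.\<close>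
definition digraph :: "'a set \<Rightarrow> ('a \<times> 'a) set \<Rightarrow> bool" where
  "digraph V A \<longleftrightarrow> finite V \<and> A \<subseteq> V \<times> V \<and> (\<forall>v. (v, v) \<notin> A)"

definition out_degree :: "('a \<times> 'a) set \<Rightarrow> 'a \<Rightarrow> nat" where
  "out_degree A v = card {w. (v, w) \<in> A}"

definition dipath :: "'a set \<Rightarrow> ('a \<times> 'a) set \<Rightarrow> 'a list \<Rightarrow> 'a \<Rightarrow> 'a \<Rightarrow> bool" where
  "dipath V A p x y \<longleftrightarrow> 2 \<le> length p \<and> hd p = x \<and> last p = y \<and> distinct p \<and>
     set p \<subseteq> V \<and> (\<forall>i. Suc i < length p \<longrightarrow> (p ! i, p ! Suc i) \<in> A)"

definition inner_vertices :: "'a list \<Rightarrow> 'a set" where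
  "inner_vertices p = set (butlast (tl p))"

definition contains_subdivision ::
  "'a set \<Rightarrow> ('a \<times> 'a) set \<Rightarrow> 'b set \<Rightarrow> ('b \<times> 'b) set \<Rightarrow> bool" where
  "contains_subdivision V A VF AF \<longleftrightarrow>
     (\<exists>f P. inj_on f VF \<and> f ` VF \<subseteq> V \<and>
        (\<forall>x y. (x, y) \<in> AF \<longrightarrow> dipath V A (P (x, y)) (f x) (f y)) \<and>
        (\<forall>e \<in> AF. inner_vertices (P e) \<inter> f ` VF = {}) \<and>
        (\<forall>e \<in> AF. \<forall>e' \<in> AF. e \<noteq> e' \<longrightarrow> inner_vertices (P e) \<inter> inner_vertices (P e') = {}))"

definition K3_bi_verts :: "nat set" where "K3_bi_verts = {0, 1, 2}"

definition K3_bi_arcs :: "(nat \<times> nat) set" where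
  "K3_bi_arcs = {(i, j). i \<in> K3_bi_verts \<and> j \<in> K3_bi_verts \<and> i \<noteq> j}"

definition K3_bi_minus_e_arcs :: "(nat \<times> nat) set" where
  "K3_bi_minus_e_arcs = K3_bi_arcs - {(2, 0)}"

end

theory Submission
  imports Defs
begin


fun arcs_ok :: "('a \<times> 'a) set \<Rightarrow> 'a list \<Rightarrow> bool" where
  "arcs_ok A (a # b # r) = ((a, b) \<in> A \<and> arcs_ok A (b # r))"
| "arcs_ok A _ = True"

lemma arcs_ok_iff: "arcs_ok A p \<longleftrightarrow> (\<forall>i. Suc i < length p \<longrightarrow> (p ! i, p ! Suc i) \<in> A)"
proof (induction A p rule: arcs_ok.induct)
  case (1 A a b r)
  show ?case
  proof
    assume h: "arcs_ok A (a # b # r)"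
    show "\<forall>i. Suc i < length (a # b # r) \<longrightarrow> ((a # b # r) ! i, (a # b # r) ! Suc i) \<in> A"
    proof (intro allI impI)
      fix i assume "Suc i < length (a # b # r)"
      then show "((a # b # r) ! i, (a # b # r) ! Suc i) \<in> A"
        using h 1 by (cases i) auto
    qed
  next
    assume h: "\<forall>i. Suc i < length (a # b # r) \<longrightarrow> ((a # b # r) ! i, (a # b # r) ! Suc i) \<in> A"
    have "(a, b) \<in> A" using h[rule_format, of 0] by simp
    moreover have "\<forall>i. Suc i < length (b # r) \<longrightarrow> ((b # r) ! i, (b # r) ! Suc i) \<in> A"
      using h[rule_format, of "Suc _"] by simp
    ultimately show "arcs_ok A (a # b # r)" using 1 by simp
  qed
qed auto

lemma arcs_ok_Cons: "arcs_ok A (a # p) \<longleftrightarrow> ((p \<noteq> [] \<longrightarrow> (a, hd p) \<in> A) \<and> arcs_ok A p)"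
  by (cases p) auto

lemma arcs_ok_append2: "arcs_ok A (xs @ ys) \<Longrightarrow> arcs_ok A ys"
  by (induction xs) (auto simp: arcs_ok_Cons)

lemma arcs_ok_mono: "arcs_ok A p \<Longrightarrow> A \<subseteq> B \<Longrightarrow> arcs_ok B p"
  by (induction A p rule: arcs_ok.induct) auto

lemma dipath_iff: "dipath V A p x y \<longleftrightarrow> 2 \<le> length p \<and> hd p = x \<and> last p = y \<and> distinct p \<and>
     set p \<subseteq> V \<and> arcs_ok A p"
  unfolding dipath_def arcs_ok_iff by simp

lemma subdiv_mono:
  assumes "contains_subdivision V A VF AF" "V \<subseteq> V2" "A \<subseteq> A2"
  shows "contains_subdivision V2 A2 VF AF"
proof -
  obtain f P where h: "inj_on f VF" "f ` VF \<subseteq> V"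
        "\<forall>x y. (x, y) \<in> AF \<longrightarrow> dipath V A (P (x, y)) (f x) (f y)"
        "\<forall>e \<in> AF. inner_vertices (P e) \<inter> f ` VF = {}"
        "\<forall>e \<in> AF. \<forall>e' \<in> AF. e \<noteq> e' \<longrightarrow> inner_vertices (P e) \<inter> inner_vertices (P e') = {}"
    using assms(1) unfolding contains_subdivision_def by (elim exE conjE) (rule that)
  have "dipath V2 A2 (P (x, y)) (f x) (f y)" if "(x, y) \<in> AF" for x y
  proof -
    have "dipath V A (P (x, y)) (f x) (f y)" using h(3) that by simp
    then show ?thesis using assms(2,3) arcs_ok_mono[of A _ A2] unfolding dipath_iff by (meson order_trans)
  qed
  moreover have "f ` VF \<subseteq> V2" using h(2) assms(2) by (rule order_trans)
  ultimately show ?thesis unfolding contains_subdivision_def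
    by (intro exI[of _ f] exI[of _ P] conjI h(1,4,5)) auto
qed

lemma walk_to_path:
  assumes "(x, y) \<in> A\<^sup>*"
  shows "\<exists>p. p \<noteq> [] \<and> hd p = x \<and> last p = y \<and> distinct p \<and> arcs_ok A p"
  using assms
proof (induction rule: converse_rtrancl_induct)
  case base
  then show ?case by (intro exI[of _ "[y]"]) auto
next
  case (step x z)
  then obtain p where p: "p \<noteq> []" "hd p = z" "last p = y" "distinct p" "arcs_ok A p" by blast
  show ?case
  proof (cases "x \<in> set p")
    case True
    then obtain xs ys where "p = xs @ x # ys" by (meson split_list)
    then show ?thesis using p arcs_ok_append2[of A xs "x # ys"]
      by (intro exI[of _ "x # ys"]) auto
  next
    case False
    then show ?thesis using p step by (intro exI[of _ "x # p"]) (auto simp: arcs_ok_Cons)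
  qed
qed

lemma arcs_ok_set:
  assumes "arcs_ok A p" "A \<subseteq> V \<times> V" "2 \<le> length p"
  shows "set p \<subseteq> V"
proof
  fix z assume "z \<in> set p"
  then obtain i where i: "i < length p" "p ! i = z" by (meson in_set_conv_nth)
  show "z \<in> V"
  proof (cases "Suc i < length p")
    case True
    then show ?thesis using assms i unfolding arcs_ok_iff by blast
  next
    case False
    have si: "Suc (i - 1) = i" using False assms(3) i by linarith
    then have "Suc (i - 1) < length p" using i(1) by simp
    then have "(p ! (i - 1), p ! Suc (i - 1)) \<in> A" using assms(1) unfolding arcs_ok_iff
      by blast
    then have "(p ! (i - 1), z) \<in> A" using si i(2) by simp
    then show ?thesis using assms(2) by auto
  qed
qed

lemma reach_dipath:
  assumes "(x, y) \<in> A\<^sup>*" "x \<noteq> y" "A \<subseteq> V \<times> V"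
  shows "\<exists>p. dipath V A p x y"
proof -
  obtain p where p: "p \<noteq> []" "hd p = x" "last p = y" "distinct p" "arcs_ok A p"
    using walk_to_path[OF assms(1)] by blast
  have "2 \<le> length p"
  proof (rule ccontr)
    assume "\<not> 2 \<le> length p"
    moreover have "length p \<noteq> 0" using p(1) by simp
    ultimately have "length p = 1" by linarith
    then have "hd p = last p" by (cases p) auto
    then show False using p assms(2) by simp
  qed
  then show ?thesis unfolding dipath_iff using p arcs_ok_set[OF p(5) assms(3)] by blast
qed

lemma card_in_sum:
  assumes "finite V" "A \<subseteq> V \<times> V"
  shows "card A = (\<Sum>p\<in>V. card {a. (a, p) \<in> A})"
proof -
  have "A\<inverse> = (SIGMA p:V. {a. (a, p) \<in> A})" using assms(2) by auto
  moreover have "\<forall>p\<in>V. finite {a. (a, p) \<in> A}"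
  proof
    fix p
    have "finite A" using assms(2) by (rule finite_subset) (simp add: assms(1))
    moreover have "{a. (a, p) \<in> A} \<subseteq> fst ` A" by force
    ultimately show "finite {a. (a, p) \<in> A}" using finite_subset by blast
  qed
  ultimately have "card (A\<inverse>) = (\<Sum>p\<in>V. card {a. (a, p) \<in> A})" using assms(1) by simp
  then show ?thesis by simp
qed

lemma card_out_sum:
  assumes "finite V" "A \<subseteq> V \<times> V"
  shows "card A = (\<Sum>p\<in>V. out_degree A p)"
proof -
  have e: "A = (SIGMA p:V. {a. (p, a) \<in> A})" using assms(2) by auto
  have "\<forall>p\<in>V. finite {a. (p, a) \<in> A}"
  proof
    fix p
    have "finite A" using assms(2) by (rule finite_subset) (simp add: assms(1))
    moreover have "{a. (p, a) \<in> A} \<subseteq> snd ` A" by force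
    ultimately show "finite {a. (p, a) \<in> A}" using finite_subset by blast
  qed
  then have "card (SIGMA p:V. {a. (p, a) \<in> A}) = (\<Sum>p\<in>V. card {a. (p, a) \<in> A})"
    using assms(1) by (rule card_SigmaI[rotated])
  then have "card A = (\<Sum>p\<in>V. card {a. (p, a) \<in> A})" using e by simp
  then show ?thesis unfolding out_degree_def .
qed


fun ins :: "'a \<Rightarrow> 'a \<Rightarrow> 'a \<Rightarrow> 'a list \<Rightarrow> 'a list" where
  "ins u v w (a # b # r) = (if a = u \<and> b = w then a # v # b # r else a # ins u v w (b # r))"
| "ins u v w r = r"

fun hasarc :: "'a \<Rightarrow> 'a \<Rightarrow> 'a list \<Rightarrow> bool" where
  "hasarc u w (a # b # r) = ((a = u \<and> b = w) \<or> hasarc u w (b # r))"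
| "hasarc u w r = False"

lemma ins_set: "set (ins u v w p) = set p \<union> (if hasarc u w p then {v} else {})"
  by (induction u v w p rule: ins.induct) auto

lemma ins_hd: "p \<noteq> [] \<Longrightarrow> hd (ins u v w p) = hd p"
  by (induction u v w p rule: ins.induct) auto

lemma ins_nonempty: "p \<noteq> [] \<Longrightarrow> ins u v w p \<noteq> []"
  by (induction u v w p rule: ins.induct) auto

lemma ins_last: "p \<noteq> [] \<Longrightarrow> last (ins u v w p) = last p"
proof (induction u v w p rule: ins.induct)
  case (1 u v w a b r)
  then show ?case using ins_nonempty[of "b # r" u v w] by auto
qed auto

lemma ins_length: "length p \<le> length (ins u v w p)"
  by (induction u v w p rule: ins.induct) auto

lemma ins_distinct: "distinct p \<Longrightarrow> v \<notin> set p \<Longrightarrow> distinct (ins u v w p)"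
proof (induction u v w p rule: ins.induct)
  case (1 u v w a b r)
  show ?case
  proof (cases "a = u \<and> b = w")
    case True
    then show ?thesis using 1(2,3) by auto
  next
    case False
    have "a \<notin> set (ins u v w (b # r))" using 1(2,3) unfolding ins_set by auto
    then show ?thesis using False 1 by auto
  qed
qed auto

lemma arcs_ok_remove: "arcs_ok (insert (u, w) A) q \<Longrightarrow> u \<notin> set q \<Longrightarrow> arcs_ok A q"
  by (induction "insert (u, w) A" q rule: arcs_ok.induct) auto

lemma ins_arcs:
  assumes "arcs_ok (insert (u, w) A) p" "distinct p" "(u, v) \<in> A" "(v, w) \<in> A"
  shows "arcs_ok A (ins u v w p)"
  using assms
proof (induction u v w p rule: ins.induct)
  case (1 u v w a b r)
  show ?case
  proof (cases "a = u \<and> b = w")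
    case True
    have "arcs_ok (insert (u, w) A) (b # r)" using 1(2) by simp
    moreover have "u \<notin> set (b # r)" using 1(3) True by auto
    ultimately have "arcs_ok A (b # r)" by (rule arcs_ok_remove)
    then show ?thesis using True 1(4,5) by simp
  next
    case False
    have ab: "(a, b) \<in> A" using 1(2) False by auto
    have "arcs_ok A (ins u v w (b # r))" using 1 False by simp
    moreover have "hd (ins u v w (b # r)) = b" using ins_hd[of "b # r"] by simp
    moreover have "ins u v w (b # r) \<noteq> []" using ins_nonempty[of "b # r"] by simp
    ultimately have "arcs_ok A (a # ins u v w (b # r))" using ab by (simp add: arcs_ok_Cons)
    moreover have "ins u v w (a # b # r) = a # ins u v w (b # r)"
      unfolding ins.simps(1) by (rule if_not_P[OF False])
    ultimately show ?thesis by simp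
  qed
qed auto

lemma hasarc_split: "hasarc u w p \<Longrightarrow> \<exists>xs ys. p = xs @ u # w # ys"
proof (induction u w p rule: hasarc.induct)
  case (1 u w a b r)
  show ?case
  proof (cases "a = u \<and> b = w")
    case True
    then show ?thesis by (intro exI[of _ "[]"] exI[of _ r]) simp
  next
    case False
    then obtain xs ys where "b # r = xs @ u # w # ys" using 1 by auto
    then show ?thesis by (intro exI[of _ "a # xs"] exI[of _ ys]) simp
  qed
qed auto

lemma set_butlast_distinct: "distinct xs \<Longrightarrow> xs \<noteq> [] \<Longrightarrow> set (butlast xs) = set xs - {last xs}"
proof -
  assume d: "distinct xs" and ne: "xs \<noteq> []"
  have e: "xs = butlast xs @ [last xs]" using ne by simp
  then have "last xs \<notin> set (butlast xs)" using d by (metis distinct_append disjoint_iff list.set_intros(1))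
  moreover have "set xs = set (butlast xs) \<union> {last xs}" using e by (metis set_append empty_set list.simps(15))
  ultimately show ?thesis by blast
qed

lemma inner_distinct:
  assumes "distinct q" "2 \<le> length q"
  shows "inner_vertices q = set q - {hd q, last q}"
proof -
  obtain a q' where q: "q = a # q'" using assms(2) by (cases q) auto
  have ne: "q' \<noteq> []" using assms(2) q by auto
  have "inner_vertices q = set (butlast q')" unfolding inner_vertices_def q by simp
  also have "\<dots> = set q' - {last q'}" using set_butlast_distinct[of q'] assms(1) q ne by simp
  also have "\<dots> = set q - {hd q, last q}" using assms(1) q ne by auto
  finally show ?thesis .
qed


lemma inner_subset: "inner_vertices p \<subseteq> set p"
  unfolding inner_vertices_def by (cases p) (auto dest: in_set_butlastD)

lemma lift:
  assumes sub: "contains_subdivision V' A' VF AF"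
    and AA: "A' \<subseteq> insert (u, w) A" and VV: "V' \<subseteq> V" and v: "v \<in> V" "v \<notin> V'"
    and uv: "(u, v) \<in> A" and vw: "(v, w) \<in> A" and AF: "AF \<subseteq> VF \<times> VF"
  shows "contains_subdivision V A VF AF"
proof -
  obtain f P where h: "inj_on f VF" "f ` VF \<subseteq> V'"
        "\<forall>x y. (x, y) \<in> AF \<longrightarrow> dipath V' A' (P (x, y)) (f x) (f y)"
        "\<forall>e \<in> AF. inner_vertices (P e) \<inter> f ` VF = {}"
        "\<forall>e \<in> AF. \<forall>e' \<in> AF. e \<noteq> e' \<longrightarrow> inner_vertices (P e) \<inter> inner_vertices (P e') = {}"
    using sub unfolding contains_subdivision_def by (elim exE conjE) (rule that)
  define Q where "Q e = ins u v w (P e)" for e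
  have pe: "2 \<le> length (P e) \<and> hd (P e) = f (fst e) \<and> last (P e) = f (snd e) \<and> distinct (P e)
      \<and> set (P e) \<subseteq> V' \<and> arcs_ok A' (P e)" if "e \<in> AF" for e
  proof -
    obtain x y where e: "e = (x, y)" by (cases e)
    have "dipath V' A' (P (x, y)) (f x) (f y)" using h(3) that unfolding e by simp
    then show ?thesis unfolding e dipath_iff by simp
  qed
  have vnot: "v \<notin> set (P e)" if "e \<in> AF" for e using pe[OF that] v(2) by blast
  have fV: "f (fst e) \<in> f ` VF" "f (snd e) \<in> f ` VF" if "e \<in> AF" for e
    using AF that by (auto simp: mem_Times_iff)
  have innerQ: "inner_vertices (Q e) \<subseteq> inner_vertices (P e) \<union> (if hasarc u w (P e) then {v} else {})"
    if "e \<in> AF" for e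
  proof -
    have d: "distinct (P e)" "2 \<le> length (P e)" using pe[OF that] by auto
    have ne: "P e \<noteq> []" using d(2) by auto
    have dq1: "distinct (Q e)" unfolding Q_def by (rule ins_distinct[OF d(1) vnot[OF that]])
    have dq2: "2 \<le> length (Q e)" unfolding Q_def using ins_length[of "P e" u v w] d(2) by linarith
    have "inner_vertices (Q e) = set (Q e) - {hd (Q e), last (Q e)}" by (rule inner_distinct[OF dq1 dq2])
    also have "\<dots> = (set (P e) \<union> (if hasarc u w (P e) then {v} else {})) - {hd (P e), last (P e)}"
      unfolding Q_def ins_set ins_hd[OF ne] ins_last[OF ne] ..
    also have "\<dots> \<subseteq> inner_vertices (P e) \<union> (if hasarc u w (P e) then {v} else {})"
      using inner_distinct[OF d] by auto
    finally show ?thesis .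
  qed
  have dQ: "dipath V A (Q (x, y)) (f x) (f y)" if "(x, y) \<in> AF" for x y
  proof -
    let ?p = "P (x, y)"
    have p: "2 \<le> length ?p" "hd ?p = f x" "last ?p = f y" "distinct ?p" "set ?p \<subseteq> V'" "arcs_ok A' ?p"
      using pe[OF that] by auto
    have ne: "?p \<noteq> []" using p(1) by auto
    have "arcs_ok (insert (u, w) A) ?p" using arcs_ok_mono[OF p(6) AA] .
    then have a1: "arcs_ok A (Q (x, y))" unfolding Q_def by (rule ins_arcs[OF _ p(4) uv vw])
    have a2: "set (Q (x, y)) \<subseteq> V" unfolding Q_def ins_set using p(5) VV v(1) by auto
    have a3: "distinct (Q (x, y))" unfolding Q_def by (rule ins_distinct[OF p(4) vnot[OF that]])
    have a4: "2 \<le> length (Q (x, y))" unfolding Q_def using ins_length[of ?p u v w] p(1) by linarith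
    have a5: "hd (Q (x, y)) = f x" "last (Q (x, y)) = f y"
      unfolding Q_def using ins_hd[OF ne] ins_last[OF ne] p(2,3) by auto
    show ?thesis unfolding dipath_iff using a1 a2 a3 a4 a5 by simp
  qed
  have in_inner: "z \<in> inner_vertices (P e)" if "e \<in> AF" "z \<in> set (P e)" "z \<notin> f ` VF" for e z
  proof -
    have d: "distinct (P e)" "2 \<le> length (P e)" using pe[OF that(1)] by auto
    have "z \<noteq> hd (P e)" "z \<noteq> last (P e)" using pe[OF that(1)] fV[OF that(1)] that(3) by auto
    then show ?thesis using inner_distinct[OF d] that(2) by auto
  qed
  have key: "hd (P e) = u \<and> last (P e) = w"
    if ke: "e \<in> AF" "hasarc u w (P e)" "u \<in> f ` VF" "w \<in> f ` VF" for e
  proof -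
    have d: "distinct (P e)" "2 \<le> length (P e)" using pe[OF ke(1)] by auto
    obtain xs ys where sp: "P e = xs @ u # w # ys" using hasarc_split[OF ke(2)] by blast
    have inn: "inner_vertices (P e) \<inter> f ` VF = {}" using h(4) ke(1) by blast
    have us: "u \<in> set (P e)" "w \<in> set (P e)" using sp by auto
    have "u \<notin> inner_vertices (P e)" "w \<notin> inner_vertices (P e)" using inn ke(3,4) by auto
    then have m: "u \<in> {hd (P e), last (P e)}" "w \<in> {hd (P e), last (P e)}"
      using inner_distinct[OF d] us by auto
    have dd: "distinct (xs @ u # w # ys)" using d(1) sp by simp
    have "last (P e) = last (w # ys)" using sp by simp
    moreover have "last (w # ys) \<in> set (w # ys)" by (rule last_in_set) simp
    moreover have "u \<notin> set (w # ys)" using dd by auto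
    ultimately have n1: "u \<noteq> last (P e)" by auto
    have "hd (P e) \<in> set (xs @ [u])" using sp by (cases xs) auto
    moreover have "w \<notin> set (xs @ [u])" using dd by auto
    ultimately have n2: "w \<noteq> hd (P e)" by auto
    show ?thesis using m n1 n2 by auto
  qed
  have disj: "\<not> (hasarc u w (P e) \<and> hasarc u w (P e'))"
    if "e \<in> AF" "e' \<in> AF" "e \<noteq> e'" for e e'
  proof
    assume hh: "hasarc u w (P e) \<and> hasarc u w (P e')"
    obtain xs ys where sp: "P e = xs @ u # w # ys" using hasarc_split[of u w "P e"] hh by blast
    obtain xs' ys' where sp': "P e' = xs' @ u # w # ys'" using hasarc_split[of u w "P e'"] hh by blast
    have dis: "inner_vertices (P e) \<inter> inner_vertices (P e') = {}" using h(5) that by blast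
    have uS: "u \<in> f ` VF"
    proof (rule ccontr)
      assume "u \<notin> f ` VF"
      moreover have "u \<in> set (P e)" "u \<in> set (P e')" using sp sp' by auto
      ultimately have "u \<in> inner_vertices (P e)" "u \<in> inner_vertices (P e')"
        using in_inner[OF that(1)] in_inner[OF that(2)] by blast+
      then show False using dis by blast
    qed
    have wS: "w \<in> f ` VF"
    proof (rule ccontr)
      assume "w \<notin> f ` VF"
      moreover have "w \<in> set (P e)" "w \<in> set (P e')" using sp sp' by auto
      ultimately have "w \<in> inner_vertices (P e)" "w \<in> inner_vertices (P e')"
        using in_inner[OF that(1)] in_inner[OF that(2)] by blast+
      then show False using dis by blast
    qed
    have k1: "hd (P e) = u \<and> last (P e) = w" using key that(1) hh uS wS by blast
    have k2: "hd (P e') = u \<and> last (P e') = w" using key that(2) hh uS wS by blast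
    have "f (fst e) = f (fst e')" "f (snd e) = f (snd e')" using k1 k2 pe[OF that(1)] pe[OF that(2)] by auto
    moreover have "fst e \<in> VF" "fst e' \<in> VF" "snd e \<in> VF" "snd e' \<in> VF" using AF that(1,2) by auto
    ultimately have "fst e = fst e'" "snd e = snd e'" using h(1) unfolding inj_on_def by blast+
    then show False using that(3) by (simp add: prod_eq_iff)
  qed
  have c4: "\<forall>e \<in> AF. inner_vertices (Q e) \<inter> f ` VF = {}"
  proof
    fix e assume e: "e \<in> AF"
    have "v \<notin> f ` VF" using h(2) v(2) by blast
    moreover have "inner_vertices (P e) \<inter> f ` VF = {}" using h(4) e by blast
    ultimately show "inner_vertices (Q e) \<inter> f ` VF = {}" using innerQ[OF e]
      by (auto split: if_splits)
  qed
  have c5: "\<forall>e \<in> AF. \<forall>e' \<in> AF. e \<noteq> e' \<longrightarrow> inner_vertices (Q e) \<inter> inner_vertices (Q e') = {}"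
  proof (intro ballI impI)
    fix e e' assume e: "e \<in> AF" "e' \<in> AF" "e \<noteq> e'"
    have "inner_vertices (P e) \<inter> inner_vertices (P e') = {}" using h(5) e by blast
    moreover have "v \<notin> inner_vertices (P e)" "v \<notin> inner_vertices (P e')"
      using vnot[OF e(1)] vnot[OF e(2)] inner_subset[of "P e"] inner_subset[of "P e'"] by blast+
    ultimately show "inner_vertices (Q e) \<inter> inner_vertices (Q e') = {}"
      using innerQ[OF e(1)] innerQ[OF e(2)] disj[OF e] by (auto split: if_splits)
  qed
  have c2: "f ` VF \<subseteq> V" using h(2) VV by (rule order_trans)
  show ?thesis unfolding contains_subdivision_def
    by (intro exI[of _ f] exI[of _ Q] conjI h(1) c2 c4 c5 allI impI dQ)
qed


lemma K3_arcs: "K3_bi_minus_e_arcs = {(0, 1), (1, 0), (1, 2), (2, 1), (0, 2)}"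
  unfolding K3_bi_minus_e_arcs_def K3_bi_arcs_def K3_bi_verts_def by auto

lemma K3_AF: "K3_bi_minus_e_arcs \<subseteq> K3_bi_verts \<times> K3_bi_verts"
  unfolding K3_arcs K3_bi_verts_def by auto

lemma dipath2: "a \<noteq> b \<Longrightarrow> a \<in> V \<Longrightarrow> b \<in> V \<Longrightarrow> (a, b) \<in> A \<Longrightarrow> dipath V A [a, b] a b"
  unfolding dipath_iff by simp

lemma inner2: "inner_vertices [a, b] = {}"
  unfolding inner_vertices_def by simp

lemma direct:
  assumes arcs: "(v, u) \<in> A" "(u, v) \<in> A" "(u, x) \<in> A" "(v, x) \<in> A"
    and Q: "dipath V A Q x u" "v \<notin> set Q"
    and ne: "u \<noteq> v" "x \<noteq> u" "x \<noteq> v" and inV: "u \<in> V" "v \<in> V" "x \<in> V"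
  shows "contains_subdivision V A K3_bi_verts K3_bi_minus_e_arcs"
proof -
  define f :: "nat \<Rightarrow> 'a" where "f i = (if i = 0 then v else if i = 1 then u else x)" for i
  define P :: "nat \<times> nat \<Rightarrow> 'a list" where
    "P e = (if e = (0, 1) then [v, u] else if e = (1, 0) then [u, v] else if e = (1, 2) then [u, x]
            else if e = (2, 1) then Q else [v, x])" for e
  have fimg: "f ` K3_bi_verts = {v, u, x}" unfolding K3_bi_verts_def f_def by auto
  have inj: "inj_on f K3_bi_verts" unfolding K3_bi_verts_def inj_on_def f_def using ne by auto
  have Qd: "distinct Q" "2 \<le> length Q" "hd Q = x" "last Q = u" using Q(1) unfolding dipath_iff by auto
  have innQ: "inner_vertices Q = set Q - {x, u}" using inner_distinct[OF Qd(1,2)] Qd(3,4) by simp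
  have innP: "inner_vertices (P e) \<subseteq> set Q - {x, u}" for e
    unfolding P_def using innQ by (auto simp: inner2)
  have c3: "dipath V A (P (a, b)) (f a) (f b)" if "(a, b) \<in> K3_bi_minus_e_arcs" for a b
  proof -
    have "(a, b) \<in> {(0, 1), (1, 0), (1, 2), (2, 1), (0, 2)}" using that unfolding K3_arcs .
    then consider "(a, b) = (0, 1)" | "(a, b) = (1, 0)" | "(a, b) = (1, 2)" | "(a, b) = (2, 1)"
      | "(a, b) = (0, 2)" by blast
    then show ?thesis
    proof cases
      case 1 then show ?thesis unfolding P_def f_def using dipath2[of v u V A] ne inV arcs by auto
    next
      case 2 then show ?thesis unfolding P_def f_def using dipath2[of u v V A] ne inV arcs by auto
    next
      case 3 then show ?thesis unfolding P_def f_def using dipath2[of u x V A] ne inV arcs by auto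
    next
      case 4 then show ?thesis unfolding P_def f_def using Q(1) by auto
    next
      case 5 then show ?thesis unfolding P_def f_def using dipath2[of v x V A] ne inV arcs by auto
    qed
  qed
  have c4: "\<forall>e \<in> K3_bi_minus_e_arcs. inner_vertices (P e) \<inter> f ` K3_bi_verts = {}"
    using innP Q(2) unfolding fimg by blast
  have c5: "\<forall>e \<in> K3_bi_minus_e_arcs. \<forall>e' \<in> K3_bi_minus_e_arcs. e \<noteq> e' \<longrightarrow>
      inner_vertices (P e) \<inter> inner_vertices (P e') = {}"
  proof (intro ballI impI)
    fix e e' :: "nat \<times> nat" assume "e \<noteq> e'"
    then have "e \<noteq> (2, 1) \<or> e' \<noteq> (2, 1)" by blast
    then have "inner_vertices (P e) = {} \<or> inner_vertices (P e') = {}"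
      unfolding P_def by (auto simp: inner2)
    then show "inner_vertices (P e) \<inter> inner_vertices (P e') = {}" by blast
  qed
  have c2: "f ` K3_bi_verts \<subseteq> V" using fimg inV by auto
  show ?thesis unfolding contains_subdivision_def
    by (intro exI[of _ f] exI[of _ P] conjI inj c2 c4 c5 allI impI c3)
qed


lemma finN: "finite A \<Longrightarrow> finite {w. (p, w) \<in> A}"
proof -
  assume a: "finite A"
  have "{w. (p, w) \<in> A} \<subseteq> snd ` A" by force
  then show ?thesis by (rule finite_subset) (rule finite_imageI[OF a])
qed

lemma ex_out: "1 \<le> out_degree A p \<Longrightarrow> \<exists>w. (p, w) \<in> A"
  unfolding out_degree_def by (cases "{w. (p, w) \<in> A} = {}") auto

lemma H:
  fixes V :: "'a set"
  assumes "digraph V A" "r \<in> V" "\<forall>p\<in>V. p \<noteq> r \<longrightarrow> 2 \<le> out_degree A p" "1 \<le> out_degree A r"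
  shows "contains_subdivision V A K3_bi_verts K3_bi_minus_e_arcs"
  using assms
proof (induction "card A" arbitrary: V A r rule: less_induct)
  case less
  have fV: "finite V" and AV: "A \<subseteq> V \<times> V" and loop: "\<And>z. (z, z) \<notin> A"
    using less.prems(1) unfolding digraph_def by auto
  have fA: "finite A" by (rule finite_subset[OF AV]) (simp add: fV)
  have rV: "r \<in> V" by (rule less.prems(2))
  have deg: "\<And>p. p \<in> V \<Longrightarrow> p \<noteq> r \<Longrightarrow> 2 \<le> out_degree A p" using less.prems(3) by blast
  have degr: "1 \<le> out_degree A r" by (rule less.prems(4))
  have IH: "contains_subdivision V' A' K3_bi_verts K3_bi_minus_e_arcs"
    if "card A' < card A" "digraph V' A'" "r' \<in> V'" "\<forall>p\<in>V'. p \<noteq> r' \<longrightarrow> 2 \<le> out_degree A' p"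
       "1 \<le> out_degree A' r'" for V' :: "'a set" and A' r'
    using less.hyps that by blast
  show ?case
  proof (cases "\<exists>p q. (p, q) \<in> A \<and> (if p = r then 2 \<le> out_degree A p else 3 \<le> out_degree A p)")
    case True
    then obtain p q where pq: "(p, q) \<in> A" "if p = r then 2 \<le> out_degree A p else 3 \<le> out_degree A p"
      by blast
    define A' where "A' = A - {(p, q)}"
    have N': "{w. (z, w) \<in> A'} = {w. (z, w) \<in> A} - (if z = p then {q} else {})" for z
      unfolding A'_def by auto
    have od: "out_degree A' z = (if z = p then out_degree A z - 1 else out_degree A z)" for z
    proof (cases "z = p")
      case True
      have "q \<in> {w. (z, w) \<in> A}" using pq(1) True by simp
      then show ?thesis unfolding out_degree_def N' using True finN[OF fA] by (simp add: card_Diff_singleton)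
    next
      case False
      then show ?thesis unfolding out_degree_def N' by simp
    qed
    have c: "card A' < card A" unfolding A'_def by (rule card_Diff1_less[OF fA pq(1)])
    have dg: "digraph V A'" using less.prems(1) unfolding digraph_def A'_def by auto
    have d1: "\<forall>z\<in>V. z \<noteq> r \<longrightarrow> 2 \<le> out_degree A' z"
    proof (intro ballI impI)
      fix z assume z: "z \<in> V" "z \<noteq> r"
      show "2 \<le> out_degree A' z"
      proof (cases "z = p")
        case True
        then have "3 \<le> out_degree A z" using pq(2) z(2) by simp
        then show ?thesis using od[of z] True by simp
      next
        case False
        then show ?thesis using od[of z] deg[OF z] by simp
      qed
    qed
    have d2: "1 \<le> out_degree A' r"
    proof (cases "r = p")
      case True
      then have "2 \<le> out_degree A r" using pq(2) by simp
      then show ?thesis using od[of r] True by simp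
    next
      case False
      then show ?thesis using od[of r] degr by simp
    qed
    have "contains_subdivision V A' K3_bi_verts K3_bi_minus_e_arcs" by (rule IH[OF c dg rV d1 d2])
    then show ?thesis by (rule subdiv_mono) (auto simp: A'_def)
  next
    case False
    have od2: "out_degree A z = 2" if "z \<in> V" "z \<noteq> r" for z
    proof (rule ccontr)
      assume "out_degree A z \<noteq> 2"
      then have "3 \<le> out_degree A z" using deg[OF that] by simp
      moreover obtain w where "(z, w) \<in> A" using ex_out[of A z] calculation by auto
      ultimately show False using False that(2) by auto
    qed
    have od1: "out_degree A r = 1"
    proof (rule ccontr)
      assume "out_degree A r \<noteq> 1"
      then have "2 \<le> out_degree A r" using degr by simp
      moreover obtain w where "(r, w) \<in> A" using ex_out[of A r] degr by auto
      ultimately show False using False by auto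
    qed
    show ?thesis
    proof (cases "\<exists>p\<in>V. \<exists>q\<in>V. (p, q) \<notin> A\<^sup>*")
      case True
      then obtain p q where p: "p \<in> V" "q \<in> V" "(p, q) \<notin> A\<^sup>*" by blast
      define X where "X = {z. (p, z) \<in> A\<^sup>*}"
      define A' where "A' = A \<inter> (X \<times> X)"
      have clos: "b \<in> X" if "a \<in> X" "(a, b) \<in> A" for a b
      proof -
        have "(p, a) \<in> A\<^sup>*" using that(1) unfolding X_def by simp
        then have "(p, b) \<in> A\<^sup>*" using that(2) by (rule rtrancl_into_rtrancl)
        then show ?thesis unfolding X_def by simp
      qed
      have XV: "X \<subseteq> V"
      proof
        fix z assume "z \<in> X"
        then have "(p, z) \<in> A\<^sup>*" unfolding X_def by simp
        then show "z \<in> V"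
        proof (cases rule: rtranclE)
          case base then show ?thesis using p(1) by simp
        next
          case (step y) then show ?thesis using AV by auto
        qed
      qed
      have pX: "p \<in> X" unfolding X_def by simp
      have qX: "q \<notin> X" using p(3) unfolding X_def by simp
      have od': "out_degree A' a = out_degree A a" if "a \<in> X" for a
      proof -
        have "{w. (a, w) \<in> A'} = {w. (a, w) \<in> A}" using clos that unfolding A'_def by auto
        then show ?thesis unfolding out_degree_def by simp
      qed
      define r' where "r' = (if r \<in> X then r else p)"
      have r'X: "r' \<in> X" unfolding r'_def using pX by simp
      have dg: "digraph X A'" unfolding digraph_def A'_def
        using finite_subset[OF XV fV] loop by auto
      have d1: "\<forall>z\<in>X. z \<noteq> r' \<longrightarrow> 2 \<le> out_degree A' z"
      proof (intro ballI impI)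
        fix z assume z: "z \<in> X" "z \<noteq> r'"
        have "z \<noteq> r" using z unfolding r'_def by (auto split: if_splits)
        then show "2 \<le> out_degree A' z" using od'[OF z(1)] deg[of z] z(1) XV by auto
      qed
      have d2: "1 \<le> out_degree A' r'"
      proof (cases "r \<in> X")
        case True
        then show ?thesis using od'[OF r'X] degr unfolding r'_def by simp
      next
        case False
        then have "p \<noteq> r" using pX by auto
        then show ?thesis using od'[OF r'X] deg[OF p(1)] False unfolding r'_def by simp
      qed
      have c: "card A' < card A"
      proof -
        have o1: "1 \<le> out_degree A q" using deg[OF p(2)] degr by (cases "q = r") auto
        obtain w where w: "(q, w) \<in> A" using ex_out[OF o1] by blast
        have "(q, w) \<notin> A'" unfolding A'_def using qX by simp
        then have "A' \<subset> A" unfolding A'_def using w by blast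
        then show ?thesis by (rule psubset_card_mono[OF fA])
      qed
      have "contains_subdivision X A' K3_bi_verts K3_bi_minus_e_arcs" by (rule IH[OF c dg r'X d1 d2])
      then show ?thesis by (rule subdiv_mono[OF _ XV]) (auto simp: A'_def)
    next
      case False
      then have strong: "(p, q) \<in> A\<^sup>*" if "p \<in> V" "q \<in> V" for p q using that by blast
      obtain s where s: "(r, s) \<in> A" using ex_out[OF degr] by blast
      have sV: "s \<in> V" "s \<noteq> r" using s AV loop by auto
      have indeg1: "\<exists>a. (a, p) \<in> A" if pV: "p \<in> V" for p
      proof -
        obtain z where z: "z \<in> V" "z \<noteq> p"
          using sV rV by (cases "p = r") auto
        have "(z, p) \<in> A\<^sup>*" by (rule strong[OF z(1) pV])
        then show ?thesis
        proof (cases rule: rtranclE)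
          case base then show ?thesis using z(2) by simp
        next
          case (step y) then show ?thesis by blast
        qed
      qed
      have "\<exists>p\<in>V. card {a. (a, p) \<in> A} \<le> 1"
      proof (rule ccontr)
        assume "\<not> (\<exists>p\<in>V. card {a. (a, p) \<in> A} \<le> 1)"
        then have ge: "\<forall>p\<in>V. 2 \<le> card {a. (a, p) \<in> A}" by auto
        have "card A = (\<Sum>p\<in>V. card {a. (a, p) \<in> A})" by (rule card_in_sum[OF fV AV])
        also have "\<dots> \<ge> (\<Sum>p\<in>V. 2)" using ge by (intro sum_mono) auto
        finally have c1: "2 * card V \<le> card A" by simp
        have "card A = (\<Sum>p\<in>V. out_degree A p)" by (rule card_out_sum[OF fV AV])
        also have "\<dots> = out_degree A r + (\<Sum>p\<in>V - {r}. out_degree A p)"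
          using rV fV by (simp add: sum.remove)
        also have "(\<Sum>p\<in>V - {r}. out_degree A p) = (\<Sum>p\<in>V - {r}. 2)"
          using od2 by (intro sum.cong) auto
        finally have "card A = 1 + 2 * (card V - 1)" using od1 fV rV by simp
        moreover have "card V \<noteq> 0" using rV fV by auto
        ultimately show False using c1 by linarith
      qed
      then obtain v where vV: "v \<in> V" and vin: "card {a. (a, v) \<in> A} \<le> 1" by blast
      obtain u where uv: "(u, v) \<in> A" using indeg1[OF vV] by blast
      have fin_in: "finite {a. (a, v) \<in> A}"
      proof -
        have "{a. (a, v) \<in> A} \<subseteq> fst ` A" by force
        then show ?thesis by (rule finite_subset) (rule finite_imageI[OF fA])
      qed
      have onlyu: "a = u" if "(a, v) \<in> A" for a
      proof (rule ccontr)
        assume "a \<noteq> u"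
        then have "card {a, u} = 2" by simp
        moreover have "card {a, u} \<le> card {a. (a, v) \<in> A}"
          by (rule card_mono[OF fin_in]) (use that uv in auto)
        ultimately have "2 \<le> card {a. (a, v) \<in> A}" by simp
        then show False using vin by simp
      qed
      have uV: "u \<in> V" using AV uv by auto
      have uneqv: "u \<noteq> v" using loop uv by auto
      show ?thesis
      proof (cases "v = r")
        case True
        define V' where "V' = V - {r}"
        define A' where "A' = A \<inter> (V' \<times> V')"
        have ur: "u \<noteq> r" using uneqv True by simp
        have uV': "u \<in> V'" unfolding V'_def using uV ur by simp
        have od': "out_degree A' z = out_degree A z" if "z \<in> V'" "z \<noteq> u" for z
        proof -
          have "{w. (z, w) \<in> A'} = {w. (z, w) \<in> A}"
          proof
            show "{w. (z, w) \<in> A'} \<subseteq> {w. (z, w) \<in> A}" unfolding A'_def by auto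
            show "{w. (z, w) \<in> A} \<subseteq> {w. (z, w) \<in> A'}"
            proof
              fix w assume w: "w \<in> {w. (z, w) \<in> A}"
              then have "w \<noteq> r" using onlyu[of z] True that(2) by auto
              then show "w \<in> {w. (z, w) \<in> A'}" using w that(1) AV unfolding A'_def V'_def by auto
            qed
          qed
          then show ?thesis unfolding out_degree_def by simp
        qed
        have odu: "out_degree A' u = 1"
        proof -
          have "{w. (u, w) \<in> A'} = {w. (u, w) \<in> A} - {r}" using uV' AV unfolding A'_def V'_def by auto
          moreover have "r \<in> {w. (u, w) \<in> A}" using uv True by simp
          ultimately have "out_degree A' u = out_degree A u - 1"
            unfolding out_degree_def using finN[OF fA] by (simp add: card_Diff_singleton)
          then show ?thesis using od2[OF uV ur] by simp
        qed
        have dg: "digraph V' A'" unfolding digraph_def A'_def V'_def using fV loop by auto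
        have d1: "\<forall>z\<in>V'. z \<noteq> u \<longrightarrow> 2 \<le> out_degree A' z"
        proof (intro ballI impI)
          fix z assume z: "z \<in> V'" "z \<noteq> u"
          then have "z \<in> V" "z \<noteq> r" unfolding V'_def by auto
          then show "2 \<le> out_degree A' z" using od'[OF z] deg by simp
        qed
        have d2: "1 \<le> out_degree A' u" using odu by simp
        have c: "card A' < card A"
        proof -
          have "(u, r) \<notin> A'" unfolding A'_def V'_def by simp
          then have "A' \<subset> A" unfolding A'_def using uv True by blast
          then show ?thesis by (rule psubset_card_mono[OF fA])
        qed
        have "contains_subdivision V' A' K3_bi_verts K3_bi_minus_e_arcs" by (rule IH[OF c dg uV' d1 d2])
        then show ?thesis by (rule subdiv_mono) (auto simp: A'_def V'_def)
      next
        case vr: False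
        show ?thesis
        proof (cases "\<exists>w. (v, w) \<in> A \<and> w \<noteq> u \<and> (u, w) \<notin> A")
          case True
          then obtain w where w: "(v, w) \<in> A" "w \<noteq> u" "(u, w) \<notin> A" by blast
          define V' where "V' = V - {v}"
          define A' where "A' = insert (u, w) (A \<inter> (V' \<times> V'))"
          have wV: "w \<in> V" "w \<noteq> v" using w(1) AV loop by auto
          have uV': "u \<in> V'" and wV': "w \<in> V'" and rV': "r \<in> V'"
            unfolding V'_def using uV uneqv wV rV vr by auto
          have od': "out_degree A' z = out_degree A z" if z: "z \<in> V'" for z
          proof (cases "z = u")
            case False
            have "{y. (z, y) \<in> A'} = {y. (z, y) \<in> A}"
            proof
              show "{y. (z, y) \<in> A'} \<subseteq> {y. (z, y) \<in> A}" unfolding A'_def using False by auto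
              show "{y. (z, y) \<in> A} \<subseteq> {y. (z, y) \<in> A'}"
              proof
                fix y assume y: "y \<in> {y. (z, y) \<in> A}"
                then have "y \<noteq> v" using onlyu[of z] False by auto
                then show "y \<in> {y. (z, y) \<in> A'}" using y z AV unfolding A'_def V'_def by auto
              qed
            qed
            then show ?thesis unfolding out_degree_def by simp
          next
            case True
            have e: "{y. (z, y) \<in> A'} = insert w ({y. (u, y) \<in> A} - {v})"
              using True AV uV' wV' unfolding A'_def V'_def by auto
            have "w \<notin> {y. (u, y) \<in> A} - {v}" using w(3) by simp
            then have "card {y. (z, y) \<in> A'} = Suc (card ({y. (u, y) \<in> A} - {v}))"
              unfolding e using finN[OF fA, of u] by simp
            also have "\<dots> = Suc (card {y. (u, y) \<in> A} - 1)"
              using uv finN[OF fA, of u] by (simp add: card_Diff_singleton)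
            also have "\<dots> = card {y. (u, y) \<in> A}"
            proof -
              have "{y. (u, y) \<in> A} \<noteq> {}" using uv by auto
              then have "card {y. (u, y) \<in> A} \<noteq> 0" using finN[OF fA, of u] by simp
              then show ?thesis by simp
            qed
            finally show ?thesis unfolding out_degree_def True .
          qed
          have dg: "digraph V' A'" unfolding digraph_def
          proof (intro conjI)
            show "finite V'" unfolding V'_def using fV by simp
            show "A' \<subseteq> V' \<times> V'" unfolding A'_def using uV' wV' by auto
            show "\<forall>z. (z, z) \<notin> A'" unfolding A'_def using loop w(2) by auto
          qed
          have d1: "\<forall>z\<in>V'. z \<noteq> r \<longrightarrow> 2 \<le> out_degree A' z"
          proof (intro ballI impI)
            fix z assume z: "z \<in> V'" "z \<noteq> r"
            then have "z \<in> V" unfolding V'_def by auto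
            then show "2 \<le> out_degree A' z" using od'[OF z(1)] deg z(2) by simp
          qed
          have d2: "1 \<le> out_degree A' r" using od'[OF rV'] degr by simp
          have c: "card A' < card A"
          proof -
            have sub: "A \<inter> (V' \<times> V') \<subseteq> A - {(u, v)} - {(v, w)}" unfolding V'_def by auto
            have vw2: "(v, w) \<in> A - {(u, v)}" using w(1) uneqv by auto
            have "card (A - {(u, v)} - {(v, w)}) = card A - 2"
              using fA uv vw2 by (simp add: card_Diff_singleton)
            moreover have "card (A \<inter> (V' \<times> V')) \<le> card (A - {(u, v)} - {(v, w)})"
              by (rule card_mono) (use fA sub in auto)
            moreover have "card A' \<le> Suc (card (A \<inter> (V' \<times> V')))"
              unfolding A'_def by (rule card_insert_le_m1) auto
            moreover have "2 \<le> card A"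
            proof -
              have "{(u, v), (v, w)} \<subseteq> A" using uv w(1) by auto
              moreover have "card {(u, v), (v, w)} = 2" using uneqv by simp
              ultimately show ?thesis using card_mono[OF fA] by metis
            qed
            ultimately show ?thesis by linarith
          qed
          have "contains_subdivision V' A' K3_bi_verts K3_bi_minus_e_arcs" by (rule IH[OF c dg rV' d1 d2])
          then show ?thesis
          proof (rule lift)
            show "A' \<subseteq> insert (u, w) A" unfolding A'_def by auto
            show "V' \<subseteq> V" unfolding V'_def by auto
            show "v \<in> V" by (rule vV)
            show "v \<notin> V'" unfolding V'_def by simp
            show "(u, v) \<in> A" by (rule uv)
            show "(v, w) \<in> A" by (rule w(1))
            show "K3_bi_minus_e_arcs \<subseteq> K3_bi_verts \<times> K3_bi_verts" by (rule K3_AF)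
          qed
        next
          case False
          then have vout: "y = u \<or> (u, y) \<in> A" if "(v, y) \<in> A" for y using that by blast
          have ur: "u \<noteq> r"
          proof
            assume ur: "u = r"
            have "card {y. (r, y) \<in> A} = 1" using od1 unfolding out_degree_def .
            then obtain z where z: "{y. (r, y) \<in> A} = {z}" by (rule card_1_singletonE)
            have "v \<in> {y. (r, y) \<in> A}" using uv ur by simp
            then have Nr: "{y. (r, y) \<in> A} = {v}" using z by simp
            have "{y. (v, y) \<in> A} \<subseteq> {r}"
            proof
              fix y assume y: "y \<in> {y. (v, y) \<in> A}"
              then have "y \<noteq> v" using loop by auto
              then show "y \<in> {r}" using vout[of y] y ur Nr by auto
            qed
            then have "card {y. (v, y) \<in> A} \<le> card {r}" by (rule card_mono[rotated]) simp
            then show False using od2[OF vV vr] unfolding out_degree_def by simp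
          qed
          have odu: "card {y. (u, y) \<in> A} = 2" using od2[OF uV ur] unfolding out_degree_def .
          have "card ({y. (u, y) \<in> A} - {v}) = 1"
            using odu uv finN[OF fA, of u] by (simp add: card_Diff_singleton)
          then obtain x where x: "{y. (u, y) \<in> A} - {v} = {x}" by (rule card_1_singletonE)
          have ux: "(u, x) \<in> A" and xnev: "x \<noteq> v" using x by auto
          have Nv: "{y. (v, y) \<in> A} \<subseteq> {u, x}"
          proof
            fix y assume y: "y \<in> {y. (v, y) \<in> A}"
            then have "y \<noteq> v" using loop by auto
            then show "y \<in> {u, x}" using vout[of y] y x by auto
          qed
          have odv: "card {y. (v, y) \<in> A} = 2" using od2[OF vV vr] unfolding out_degree_def .
          have xneu: "x \<noteq> u"
          proof
            assume "x = u"
            then have "{y. (v, y) \<in> A} \<subseteq> {u}" using Nv by simp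
            then have "card {y. (v, y) \<in> A} \<le> card {u}" by (rule card_mono[rotated]) simp
            then show False using odv by simp
          qed
          have "{y. (v, y) \<in> A} = {u, x}"
            by (rule card_subset_eq) (use Nv odv xneu in auto)
          then have vu: "(v, u) \<in> A" and vx: "(v, x) \<in> A" by auto
          have xV: "x \<in> V" using ux AV by auto
          obtain Q where Q: "dipath V A Q x u" using reach_dipath[OF strong[OF xV uV] xneu AV] by blast
          have vQ: "v \<notin> set Q"
          proof
            assume "v \<in> set Q"
            then obtain i where i: "i < length Q" "Q ! i = v" by (auto simp: in_set_conv_nth)
            have Qp: "2 \<le> length Q" "hd Q = x" "last Q = u" "distinct Q"
              "\<forall>i. Suc i < length Q \<longrightarrow> (Q ! i, Q ! Suc i) \<in> A"
              using Q unfolding dipath_def by auto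
            have Qne: "Q \<noteq> []" using Qp(1) by auto
            have "Q ! 0 = x" using Qp(2) Qne by (simp add: hd_conv_nth)
            have i0: "i \<noteq> 0"
            proof
              assume "i = 0"
              then show False using i(2) xnev \<open>Q ! 0 = x\<close> by simp
            qed
            then have si: "Suc (i - 1) = i" by simp
            have "Suc (i - 1) < length Q" using si i(1) by simp
            then have "(Q ! (i - 1), Q ! Suc (i - 1)) \<in> A" using Qp(5) by blast
            then have "(Q ! (i - 1), v) \<in> A" using si i(2) by simp
            then have q1: "Q ! (i - 1) = u" by (rule onlyu)
            have q2: "Q ! (length Q - 1) = u" using Qp(3) Qne by (simp add: last_conv_nth)
            have "i - 1 = length Q - 1"
              using nth_eq_iff_index_eq[OF Qp(4), of "i - 1" "length Q - 1"] q1 q2 i(1) Qne by simp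
            then show False using i(1) i0 by simp
          qed
          show ?thesis by (rule direct[OF vu uv ux vx Q vQ uneqv xneu xnev uV vV xV])
        qed
      qed
    qed
  qed
qed


theorem theorem1p2:
  fixes V :: "'a set" and A :: "('a \<times> 'a) set"
  assumes "digraph V A"
    and "V \<noteq> {}"
    and "\<forall>v \<in> V. 2 \<le> out_degree A v"
  shows "contains_subdivision V A K3_bi_verts K3_bi_minus_e_arcs"
proof -
  obtain r where r: "r \<in> V" using assms(2) by blast
  have "1 \<le> out_degree A r" using assms(3) r by fastforce
  moreover have "\<forall>p\<in>V. p \<noteq> r \<longrightarrow> 2 \<le> out_degree A p" using assms(3) by blast
  ultimately show ?thesis using H[OF assms(1) r] by blast
qed

end
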